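(* In the standing local setup, the Chern curvature $F^r{}_\alpha=-\partial_{\bar z}(g^{r\bar\delta}\partial_z g_{\alpha\bar\delta})$ of the bundles $f^*T^{1,0}M$ (with metric $g_{\alpha\bar\beta}$) over all leaves vanishes identically if and only if $\partial\eta^\alpha/\partial\bar w_\beta\equiv0$ for all $\alpha,\beta$, i.e. if and only if for every $z$ the leaf vector field $X(z,\cdot)$ is a holomorphic vector field on $M$ (the foliation by leaves is holomorphic).
   Context: Standing local setup: $(M,\omega_0)$ is a Kähler manifold of complex dimension $n$, $\Sigma\subset\mathbb C$ a domain with coordinate $z$, and $\phi$ a smooth real function on $\Sigma\times M$ such that $\omega_\phi=\omega_0+\sqrt{-1}\partial\bar\partial_M\phi(z,\cdot)>0$ on $M$ for each $z$ and $(\pi_2^*\omega_0+\sqrt{-1}\partial\bar\partial\phi)^{n+1}=0$ on $\Sigma\times M$. In local holomorphic coordinates $w=(w_1,\dots,w_n)$ on $M$ write $g_{\alpha\bar\beta}=g_{0,\alpha\bar\beta}+\partial^2\phi/\partial w_\alpha\partial\bar w_\beta$ (the metric of $\omega_\phi$), $(g^{\alpha\bar\beta})$ its inverse, $\eta^\alpha=-g^{\alpha\bar\beta}\,\partial^2\phi/\partial z\partial\bar w_\beta$, $\eta^{\bar\alpha}=\overline{\eta^\alpha}$, $X=\eta^\alpha\partial/\partial w_\alpha$ (leaf vector field; $\partial/\partial z+X$ spans the kernel of $\pi_2^*\omega_0+\sqrt{-1}\partial\bar\partial\phi$), $\partial_z=\partial/\partial z+\eta^\alpha\partial/\partial w_\alpha$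 and $\overline{\partial_z}=\partial/\partial\bar z+\eta^{\bar\alpha}\partial/\partial\bar w_\alpha$; summation over repeated indices. Integral curves of $\partial_z$ are holomorphic curves $z\mapsto(z,f(z))$ with $f'=\eta$ (the leaves). *)

theory Defs
  imports "HOL-Analysis.Analysis"
begin

text \<open>Local coordinates on the product \<open>Sigma \<times> M\<close>: a point is \<open>(z, w)\<close> with
  \<open>z \<in> \<complex>\<close> and \<open>w \<in> \<complex>^n\<close>, the index type \<open>'n\<close> enumerating \<open>w_1, ..., w_n\<close>.
  Coordinates of the product are indexed by \<open>'n option\<close>: \<open>None\<close> is \<open>z\<close>, \<open>Some a\<close> is \<open>w_a\<close>.\<close>

type_synonym 'n pt = "complex \<times> (complex^'n)"

fun dd :: "'a::real_normed_vector list \<Rightarrow> ('a \<Rightarrow> 'b::real_normed_vector) \<Rightarrow> 'a \<Rightarrow> 'b" where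
  "dd [] f = f"
| "dd (v # vs) f = (\<lambda>p. frechet_derivative (dd vs f) (at p) v)"

definition smooth_on :: "'a::real_normed_vector set \<Rightarrow> ('a \<Rightarrow> 'b::real_normed_vector) \<Rightarrow> bool" where
  "smooth_on S f \<longleftrightarrow> (\<forall>vs. \<forall>p\<in>S. dd vs f differentiable (at p))"

definition rdir :: "'n option \<Rightarrow> 'n::finite pt" where
  "rdir k = (case k of None \<Rightarrow> (1, 0) | Some a \<Rightarrow> (0, axis a 1))"

definition idir :: "'n option \<Rightarrow> 'n::finite pt" where
  "idir k = (case k of None \<Rightarrow> (\<i>, 0) | Some a \<Rightarrow> (0, axis a \<i>))"

definition wirt :: "'n option \<Rightarrow> ('n::finite pt \<Rightarrow> complex) \<Rightarrow> 'n pt \<Rightarrow> complex" where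
  "wirt k f p = (frechet_derivative f (at p) (rdir k) - \<i> * frechet_derivative f (at p) (idir k)) / 2"

definition wirt_bar :: "'n option \<Rightarrow> ('n::finite pt \<Rightarrow> complex) \<Rightarrow> 'n pt \<Rightarrow> complex" where
  "wirt_bar k f p = (frechet_derivative f (at p) (rdir k) + \<i> * frechet_derivative f (at p) (idir k)) / 2"

definition herm_pos :: "complex^'n^'n \<Rightarrow> bool" where
  "herm_pos A \<longleftrightarrow> (\<forall>i j. A $ j $ i = cnj (A $ i $ j)) \<and>
     (\<forall>v::complex^'n. v \<noteq> 0 \<longrightarrow> Re (\<Sum>i\<in>UNIV. \<Sum>j\<in>UNIV. A $ i $ j * v $ i * cnj (v $ j)) > 0)"

definition phic :: "('n::finite pt \<Rightarrow> real) \<Rightarrow> 'n pt \<Rightarrow> complex" where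
  "phic phi = (\<lambda>p. complex_of_real (phi p))"

definition gmet :: "(complex^'n \<Rightarrow> complex^'n^'n) \<Rightarrow> ('n::finite pt \<Rightarrow> real) \<Rightarrow> 'n pt \<Rightarrow> complex^'n^'n" where
  "gmet g0 phi p = (\<chi> a b. g0 (snd p) $ a $ b + wirt (Some a) (wirt_bar (Some b) (phic phi)) p)"

text \<open>Inverse \<open>g^{a bbar}\<close>, normalised by \<open>g^{a bbar} g_{c bbar} = \<delta>^a_c\<close>.\<close>
definition ginv :: "(complex^'n \<Rightarrow> complex^'n^'n) \<Rightarrow> ('n::finite pt \<Rightarrow> real) \<Rightarrow> 'n pt \<Rightarrow> complex^'n^'n" where
  "ginv g0 phi p = matrix_inv (transpose (gmet g0 phi p))"

definition eta :: "(complex^'n \<Rightarrow> complex^'n^'n) \<Rightarrow> ('n::finite pt \<Rightarrow> real) \<Rightarrow> 'n \<Rightarrow> 'n pt \<Rightarrow> complex" where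
  "eta g0 phi a p = - (\<Sum>b\<in>UNIV. ginv g0 phi p $ a $ b * wirt None (wirt_bar (Some b) (phic phi)) p)"

definition Dz :: "(complex^'n \<Rightarrow> complex^'n^'n) \<Rightarrow> ('n::finite pt \<Rightarrow> real) \<Rightarrow> ('n pt \<Rightarrow> complex) \<Rightarrow> 'n pt \<Rightarrow> complex" where
  "Dz g0 phi h p = wirt None h p + (\<Sum>c\<in>UNIV. eta g0 phi c p * wirt (Some c) h p)"

definition Dzb :: "(complex^'n \<Rightarrow> complex^'n^'n) \<Rightarrow> ('n::finite pt \<Rightarrow> real) \<Rightarrow> ('n pt \<Rightarrow> complex) \<Rightarrow> 'n pt \<Rightarrow> complex" where
  "Dzb g0 phi h p = wirt_bar None h p + (\<Sum>c\<in>UNIV. cnj (eta g0 phi c p) * wirt_bar (Some c) h p)"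

definition curv :: "(complex^'n \<Rightarrow> complex^'n^'n) \<Rightarrow> ('n::finite pt \<Rightarrow> real) \<Rightarrow> 'n \<Rightarrow> 'n \<Rightarrow> 'n pt \<Rightarrow> complex" where
  "curv g0 phi r a p = - Dzb g0 phi
     (\<lambda>q. \<Sum>d\<in>UNIV. ginv g0 phi q $ r $ d * Dz g0 phi (\<lambda>q'. gmet g0 phi q' $ a $ d) q) p"

text \<open>Coefficient matrix of \<open>pi_2^* omega_0 + i \<partial>\<partial>bar phi\<close> on the product, indexed by \<open>'n option\<close>;
  its \<open>(n+1)\<close>-st power is a nonzero constant times its determinant times the volume form.\<close>
definition cmat :: "(complex^'n \<Rightarrow> complex^'n^'n) \<Rightarrow> ('n::finite pt \<Rightarrow> real) \<Rightarrow> 'n pt \<Rightarrow> complex^('n option)^('n option)" where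
  "cmat g0 phi p = (\<chi> i j. (case (i, j) of (Some a, Some b) \<Rightarrow> g0 (snd p) $ a $ b | _ \<Rightarrow> 0)
                       + wirt i (wirt_bar j (phic phi)) p)"

end

theory Submission
  imports Defs
begin


definition dv :: "'a::real_normed_vector \<Rightarrow> ('a \<Rightarrow> complex) \<Rightarrow> 'a \<Rightarrow> complex" where
  "dv v f p = frechet_derivative f (at p) v"

lemma fd_local:
  assumes "open S" "p \<in> S" "\<And>q. q \<in> S \<Longrightarrow> f q = g q"
  shows "frechet_derivative f (at p) = frechet_derivative g (at p)"
proof -
  have "\<And>F. (f has_derivative F) (at p) \<longleftrightarrow> (g has_derivative F) (at p)"
    using has_derivative_transform_within_open[OF _ assms(1,2)] assms(3) by metis
  then show ?thesis unfolding frechet_derivative_def by simp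
qed

lemma dv_cong:
  assumes "open S" "p \<in> S" "\<And>q. q \<in> S \<Longrightarrow> f q = g q"
  shows "dv v f p = dv v g p"
  using fd_local[OF assms] by (simp add: dv_def)

lemma dd_append: "dd vs (dd ws f) = dd (vs @ ws) f"
  by (induction vs) auto

lemma smooth_dv: "smooth_on S f \<Longrightarrow> smooth_on S (\<lambda>p. dv v f p)"
proof -
  assume a: "smooth_on S f"
  have e: "(\<lambda>p. dv v f p) = dd [v] f" by (simp add: dv_def fun_eq_iff)
  show ?thesis unfolding e smooth_on_def dd_append using a unfolding smooth_on_def by blast
qed

lemma smooth_diff: "smooth_on S f \<Longrightarrow> p \<in> S \<Longrightarrow> f differentiable (at p)"
  unfolding smooth_on_def by (metis dd.simps(1))

lemma hasd: "f differentiable (at p) \<Longrightarrow> (f has_derivative (\<lambda>v. dv v f p)) (at p)"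
  unfolding dv_def by (metis frechet_derivative_works)

lemma dv_eq: "(f has_derivative F) (at p) \<Longrightarrow> dv v f p = F v"
  unfolding dv_def by (metis frechet_derivative_at)

inductive_set sm :: "'a::real_normed_vector set \<Rightarrow> ('a \<Rightarrow> complex) set" for S where
  sm_base: "smooth_on S f \<Longrightarrow> f \<in> sm S"
| sm_inv: "smooth_on S f \<Longrightarrow> (\<forall>p\<in>S. f p \<noteq> 0) \<Longrightarrow> (\<lambda>p. inverse (f p)) \<in> sm S"
| sm_const: "(\<lambda>p. c) \<in> sm S"
| sm_add: "f \<in> sm S \<Longrightarrow> g \<in> sm S \<Longrightarrow> (\<lambda>p. f p + g p) \<in> sm S"
| sm_mult: "f \<in> sm S \<Longrightarrow> g \<in> sm S \<Longrightarrow> (\<lambda>p. f p * g p) \<in> sm S"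
| sm_cnj: "f \<in> sm S \<Longrightarrow> (\<lambda>p. cnj (f p)) \<in> sm S"
| sm_cong: "f \<in> sm S \<Longrightarrow> (\<forall>p\<in>S. g p = f p) \<Longrightarrow> g \<in> sm S"

lemma sm_neg: "f \<in> sm S \<Longrightarrow> (\<lambda>p. - f p) \<in> sm S"
  by (rule sm_cong[OF sm_mult[OF sm_const[of "-1"]]]) auto

lemma sm_diff: assumes "f \<in> sm S" "g \<in> sm S" shows "(\<lambda>p. f p - g p) \<in> sm S"
  by (rule sm_cong[OF sm_add[OF assms(1) sm_neg[OF assms(2)]]]) auto

lemma sm_sum: "finite A \<Longrightarrow> (\<And>i. i \<in> A \<Longrightarrow> f i \<in> sm S) \<Longrightarrow> (\<lambda>p. \<Sum>i\<in>A. f i p) \<in> sm S"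
proof (induction A rule: finite_induct)
  case empty then show ?case using sm_const[of 0] by simp
next
  case (insert x F)
  then show ?case using sm_add[of "f x" S "\<lambda>p. \<Sum>i\<in>F. f i p"] by simp
qed

lemma sm_prod: "finite A \<Longrightarrow> (\<And>i. i \<in> A \<Longrightarrow> f i \<in> sm S) \<Longrightarrow> (\<lambda>p. \<Prod>i\<in>A. f i p) \<in> sm S"
proof (induction A rule: finite_induct)
  case empty then show ?case using sm_const[of 1] by simp
next
  case (insert x F)
  then show ?case using sm_mult[of "f x" S "\<lambda>p. \<Prod>i\<in>F. f i p"] by simp
qed

lemma sm_key:
  assumes S: "open S" and f: "f \<in> sm S"
  shows "(\<forall>p\<in>S. f differentiable (at p)) \<and> (\<forall>v. (\<lambda>p. dv v f p) \<in> sm S)"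
  using f
proof induction
  case (sm_base f)
  then show ?case using smooth_dv smooth_diff sm.sm_base by blast
next
  case (sm_inv f)
  have d: "\<And>p. p \<in> S \<Longrightarrow> ((\<lambda>p. inverse (f p)) has_derivative
      (\<lambda>h. - (inverse (f p) * dv h f p * inverse (f p)))) (at p)"
    using sm_inv by (intro Deriv.has_derivative_inverse hasd smooth_diff) auto
  show ?case
  proof
    show "\<forall>p\<in>S. (\<lambda>p. inverse (f p)) differentiable at p" using d differentiableI by blast
    show "\<forall>v. (\<lambda>p. dv v (\<lambda>p. inverse (f p)) p) \<in> sm S"
    proof
      fix v
      have "(\<lambda>p. - ((inverse (f p) * dv v f p) * inverse (f p))) \<in> sm S"
        by (intro sm_neg sm_mult sm.sm_inv sm_base smooth_dv) (use sm_inv in auto)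
      then show "(\<lambda>p. dv v (\<lambda>p. inverse (f p)) p) \<in> sm S"
        by (rule sm_cong) (use dv_eq[OF d] in auto)
    qed
  qed
next
  case (sm_const c)
  have d: "((\<lambda>p. c) has_derivative (\<lambda>h. 0)) (at p)" for p by simp
  show ?case
  proof
    show "\<forall>p\<in>S. (\<lambda>p. c) differentiable at p" using d differentiableI by blast
    have "dv v (\<lambda>p::'a. c) = (\<lambda>p. 0)" for v by (simp add: fun_eq_iff dv_eq[OF d])
    then show "\<forall>v. (\<lambda>p. dv v (\<lambda>p. c) p) \<in> sm S"
      using sm.sm_const[of 0 S] by simp
  qed
next
  case (sm_add f g)
  have d: "\<And>p. p \<in> S \<Longrightarrow> ((\<lambda>p. f p + g p) has_derivative (\<lambda>h. dv h f p + dv h g p)) (at p)"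
    using sm_add by (intro has_derivative_add hasd) auto
  show ?case
  proof
    show "\<forall>p\<in>S. (\<lambda>p. f p + g p) differentiable at p" using d differentiableI by blast
    show "\<forall>v. (\<lambda>p. dv v (\<lambda>p. f p + g p) p) \<in> sm S"
    proof
      fix v
      have "(\<lambda>p. dv v f p + dv v g p) \<in> sm S" using sm_add by (intro sm.sm_add) auto
      then show "(\<lambda>p. dv v (\<lambda>p. f p + g p) p) \<in> sm S"
        by (rule sm_cong) (use dv_eq[OF d] in auto)
    qed
  qed
next
  case (sm_mult f g)
  have d: "\<And>p. p \<in> S \<Longrightarrow> ((\<lambda>p. f p * g p) has_derivative (\<lambda>h. f p * dv h g p + dv h f p * g p)) (at p)"
    using sm_mult by (intro has_derivative_mult hasd) auto
  show ?case
  proof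
    show "\<forall>p\<in>S. (\<lambda>p. f p * g p) differentiable at p" using d differentiableI by blast
    show "\<forall>v. (\<lambda>p. dv v (\<lambda>p. f p * g p) p) \<in> sm S"
    proof
      fix v
      have "(\<lambda>p. f p * dv v g p + dv v f p * g p) \<in> sm S" using sm_mult by (intro sm.sm_add sm.sm_mult) auto
      then show "(\<lambda>p. dv v (\<lambda>p. f p * g p) p) \<in> sm S"
        by (rule sm_cong) (use dv_eq[OF d] in auto)
    qed
  qed
next
  case (sm_cnj f)
  have d: "\<And>p. p \<in> S \<Longrightarrow> ((\<lambda>p. cnj (f p)) has_derivative (\<lambda>h. cnj (dv h f p))) (at p)"
    using sm_cnj by (intro has_derivative_cnj hasd) auto
  show ?case
  proof
    show "\<forall>p\<in>S. (\<lambda>p. cnj (f p)) differentiable at p" using d differentiableI by blast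
    show "\<forall>v. (\<lambda>p. dv v (\<lambda>p. cnj (f p)) p) \<in> sm S"
    proof
      fix v
      have "(\<lambda>p. cnj (dv v f p)) \<in> sm S" using sm_cnj by (intro sm.sm_cnj) auto
      then show "(\<lambda>p. dv v (\<lambda>p. cnj (f p)) p) \<in> sm S"
        by (rule sm_cong) (use dv_eq[OF d] in auto)
    qed
  qed
next
  case (sm_cong f g)
  show ?case
  proof
    show "\<forall>p\<in>S. g differentiable at p"
    proof
      fix p assume p: "p \<in> S"
      have "(f has_derivative (\<lambda>v. dv v f p)) (at p)" using sm_cong p hasd by blast
      then have "(g has_derivative (\<lambda>v. dv v f p)) (at p)"
        by (rule has_derivative_transform_within_open[OF _ S p]) (use sm_cong in auto)
      then show "g differentiable at p" using differentiableI by blast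
    qed
    show "\<forall>v. (\<lambda>p. dv v g p) \<in> sm S"
    proof
      fix v
      show "(\<lambda>p. dv v g p) \<in> sm S"
        by (rule sm.sm_cong[of "\<lambda>p. dv v f p"]) (use sm_cong dv_cong[OF S, of _ g f] in auto)
    qed
  qed
qed

lemma sm_dv: "open S \<Longrightarrow> f \<in> sm S \<Longrightarrow> (\<lambda>p. dv v f p) \<in> sm S"
  using sm_key by blast

lemma sm_differentiable: "open S \<Longrightarrow> f \<in> sm S \<Longrightarrow> p \<in> S \<Longrightarrow> f differentiable (at p)"
  using sm_key by blast

lemma sm_hasd: "open S \<Longrightarrow> f \<in> sm S \<Longrightarrow> p \<in> S \<Longrightarrow> (f has_derivative (\<lambda>v. dv v f p)) (at p)"
  using sm_differentiable hasd by blast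

lemma sm_dd: "open S \<Longrightarrow> f \<in> sm S \<Longrightarrow> dd vs f \<in> sm S"
proof (induction vs)
  case Nil then show ?case by simp
next
  case (Cons v vs)
  have "dd (v # vs) f = (\<lambda>p. dv v (dd vs f) p)" by (simp add: dv_def)
  then show ?case using Cons sm_dv by metis
qed

lemma sm_smooth: "open S \<Longrightarrow> f \<in> sm S \<Longrightarrow> smooth_on S f"
  unfolding smooth_on_def using sm_dd sm_differentiable by blast


lemma dv_scaleR: "f differentiable (at p) \<Longrightarrow> dv (h *\<^sub>R w) f p = of_real h * dv w f p"
proof -
  assume "f differentiable (at p)"
  then have "bounded_linear (\<lambda>v. dv v f p)" using hasd has_derivative_bounded_linear by blast
  then have "linear (\<lambda>v. dv v f p)" by (rule bounded_linear.linear)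
  then show ?thesis using linear.scaleR[of "\<lambda>v. dv v f p" h w] by (simp add: scaleR_conv_of_real)
qed

lemma line_deriv:
  assumes "open S" "f \<in> sm S" "q + \<tau> *\<^sub>R w \<in> S"
  shows "((\<lambda>s. f (q + s *\<^sub>R w)) has_derivative (\<lambda>h. of_real h * dv w f (q + \<tau> *\<^sub>R w))) (at \<tau>)"
proof -
  have 1: "((\<lambda>s. q + s *\<^sub>R w) has_derivative (\<lambda>h. h *\<^sub>R w)) (at \<tau>)"
    by (auto intro!: derivative_eq_intros)
  have 2: "(f has_derivative (\<lambda>v. dv v f (q + \<tau> *\<^sub>R w))) (at (q + \<tau> *\<^sub>R w))"
    using sm_hasd assms by blast
  have "((\<lambda>s. f (q + s *\<^sub>R w)) has_derivative (\<lambda>h. dv (h *\<^sub>R w) f (q + \<tau> *\<^sub>R w))) (at \<tau>)"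
    using has_derivative_compose[OF 1 2] by simp
  then show ?thesis
    using dv_scaleR[OF sm_differentiable[OF assms]] by simp
qed

lemma mvt_bound:
  fixes m :: "real \<Rightarrow> complex"
  assumes t: "0 < t"
    and d: "\<And>s. 0 \<le> s \<Longrightarrow> s \<le> t \<Longrightarrow> (m has_derivative (\<lambda>h. of_real h * m' s)) (at s)"
    and b: "\<And>s. 0 \<le> s \<Longrightarrow> s \<le> t \<Longrightarrow> norm (m' s) \<le> B"
  shows "norm (m t - m 0) \<le> t * B"
proof -
  have "continuous_on {0..t} m"
  proof (rule continuous_at_imp_continuous_on, rule ballI)
    fix x assume "x \<in> {0..t}"
    then show "isCont m x" using d[of x] has_derivative_continuous by auto
  qed
  from mvt_general[OF t this, of "\<lambda>s h. of_real h * m' s"] d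
  obtain x where x: "x \<in> {0<..<t}" "norm (m t - m 0) \<le> norm (of_real (t - 0) * m' x)"
    by auto
  have "norm (of_real (t - 0) * m' x) = t * norm (m' x)" using t by (simp add: norm_mult)
  also have "\<dots> \<le> t * B" using b[of x] x(1) t by (intro mult_left_mono) auto
  finally show ?thesis using x by simp
qed

lemma schwarz_lim:
  fixes f :: "'a::real_normed_vector \<Rightarrow> complex"
  assumes S: "open S" and p: "p \<in> S" and f: "f \<in> sm S"
  shows "((\<lambda>t. (f (p + t *\<^sub>R u + t *\<^sub>R v) - f (p + t *\<^sub>R u) - f (p + t *\<^sub>R v) + f p) / (of_real t)^2)
     \<longlongrightarrow> dv v (\<lambda>q. dv u f q) p) (at_right 0)"
proof -
  define g1 where "g1 = (\<lambda>q. dv u f q)"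
  define L where "L = dv v g1 p"
  have g1: "g1 \<in> sm S" using sm_dv[OF S f] g1_def by simp
  have g2: "(\<lambda>q. dv v g1 q) \<in> sm S" using sm_dv[OF S g1] .
  have cont: "continuous (at p) (\<lambda>q. dv v g1 q)"
    using sm_differentiable[OF S g2 p] differentiable_imp_continuous_within by blast
  show ?thesis unfolding tendsto_iff g1_def[symmetric] L_def[symmetric]
  proof (intro allI impI)
    fix e :: real assume e: "e > 0"
    then have "e/2 > 0" by simp
    then obtain d1 where d1: "d1 > 0" "\<And>y. dist y p < d1 \<Longrightarrow> dist (dv v g1 y) L < e/2"
      using cont unfolding continuous_at_eps_delta L_def by blast
    obtain d2 where d2: "d2 > 0" "ball p d2 \<subseteq> S" using S p open_contains_ball by blast
    define d where "d = min d1 d2"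
    define B where "B = norm u + norm v + 1"
    have B: "B > 0" unfolding B_def by (simp add: add_nonneg_pos)
    have dpos: "d > 0" using d1 d2 d_def by simp
    have key: "norm ((f (p + t *\<^sub>R u + t *\<^sub>R v) - f (p + t *\<^sub>R u) - f (p + t *\<^sub>R v) + f p)
        - of_real t * (of_real t * L)) \<le> t * (t * (e/2))" if t: "0 < t" "t < d / B" for t
    proof -
      have tB: "t * B < d" using t B by (simp add: pos_less_divide_eq)
      have inball: "dist (p + s *\<^sub>R u + \<tau> *\<^sub>R v) p < d"
        if "0 \<le> s" "s \<le> t" "0 \<le> \<tau>" "\<tau> \<le> t" for s \<tau>
      proof -
        have "dist (p + s *\<^sub>R u + \<tau> *\<^sub>R v) p = norm (s *\<^sub>R u + \<tau> *\<^sub>R v)"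
          by (simp add: dist_norm)
        also have "\<dots> \<le> norm (s *\<^sub>R u) + norm (\<tau> *\<^sub>R v)" by (rule norm_triangle_ineq)
        also have "\<dots> = s * norm u + \<tau> * norm v" using that by simp
        also have "\<dots> \<le> t * norm u + t * norm v"
          using that by (intro add_mono mult_right_mono) auto
        also have "\<dots> < t * B" using t unfolding B_def by (simp add: algebra_simps)
        finally show ?thesis using tB by simp
      qed
      have inS: "p + s *\<^sub>R u + \<tau> *\<^sub>R v \<in> S"
        if "0 \<le> s" "s \<le> t" "0 \<le> \<tau>" "\<tau> \<le> t" for s \<tau>
        using inball[OF that] d2 d_def by (auto simp: dist_commute)
      have close: "norm (dv v g1 (p + s *\<^sub>R u + \<tau> *\<^sub>R v) - L) \<le> e/2"
        if "0 \<le> s" "s \<le> t" "0 \<le> \<tau>" "\<tau> \<le> t" for s \<tau>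
        using inball[OF that] d1(2)[of "p + s *\<^sub>R u + \<tau> *\<^sub>R v"] d_def
        by (simp add: dist_norm)
      have inner: "norm (g1 (p + s *\<^sub>R u + t *\<^sub>R v) - g1 (p + s *\<^sub>R u) - of_real t * L) \<le> t * (e/2)"
        if s: "0 \<le> s" "s \<le> t" for s
      proof -
        let ?q = "p + s *\<^sub>R u"
        have "norm ((g1 (?q + t *\<^sub>R v) - of_real t * L) - (g1 (?q + 0 *\<^sub>R v) - of_real 0 * L)) \<le> t * (e/2)"
        proof (rule mvt_bound[where m'="\<lambda>\<tau>. dv v g1 (?q + \<tau> *\<^sub>R v) - L"])
          show "0 < t" using t by simp
          fix \<tau> assume \<tau>: "0 \<le> \<tau>" "\<tau> \<le> t"
          have "((\<lambda>\<tau>. g1 (?q + \<tau> *\<^sub>R v) - of_real \<tau> * L) has_derivative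
              (\<lambda>h. of_real h * dv v g1 (?q + \<tau> *\<^sub>R v) - of_real h * L)) (at \<tau>)"
            by (intro has_derivative_diff line_deriv[OF S g1] inS[OF s \<tau>]
                  has_derivative_mult_left has_derivative_of_real has_derivative_ident)
          then show "((\<lambda>\<tau>. g1 (?q + \<tau> *\<^sub>R v) - of_real \<tau> * L) has_derivative
              (\<lambda>h. of_real h * (dv v g1 (?q + \<tau> *\<^sub>R v) - L))) (at \<tau>)"
            by (rule has_derivative_eq_rhs) (simp add: fun_eq_iff algebra_simps)
          show "norm (dv v g1 (?q + \<tau> *\<^sub>R v) - L) \<le> e/2" using close[OF s \<tau>] by simp
        qed
        then show ?thesis by (simp add: algebra_simps)
      qed
      let ?m = "\<lambda>s. f ((p + t *\<^sub>R v) + s *\<^sub>R u) - f (p + s *\<^sub>R u) - of_real s * (of_real t * L)"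
      have "norm (?m t - ?m 0) \<le> t * (t * (e/2))"
      proof (rule mvt_bound[where m'="\<lambda>s. g1 (p + s *\<^sub>R u + t *\<^sub>R v) - g1 (p + s *\<^sub>R u) - of_real t * L"])
        show "0 < t" using t by simp
        fix s assume s: "0 \<le> s" "s \<le> t"
        have e1: "p + t *\<^sub>R v + s *\<^sub>R u = p + s *\<^sub>R u + t *\<^sub>R v" by (simp add: algebra_simps)
        have in1: "p + t *\<^sub>R v + s *\<^sub>R u \<in> S" using inS[OF s, of t] t unfolding e1 by simp
        have in2: "p + s *\<^sub>R u \<in> S" using inS[OF s, of 0] t by simp
        have "(?m has_derivative (\<lambda>h. of_real h * dv u f (p + t *\<^sub>R v + s *\<^sub>R u)
              - of_real h * dv u f (p + s *\<^sub>R u) - of_real h * (of_real t * L))) (at s)"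
          by (intro has_derivative_diff line_deriv[OF S f] in1 in2
                  has_derivative_mult_left has_derivative_of_real has_derivative_ident)
        then show "(?m has_derivative (\<lambda>h. of_real h * (g1 (p + s *\<^sub>R u + t *\<^sub>R v) - g1 (p + s *\<^sub>R u) - of_real t * L))) (at s)"
          by (rule has_derivative_eq_rhs) (simp add: fun_eq_iff algebra_simps g1_def e1)
        show "norm (g1 (p + s *\<^sub>R u + t *\<^sub>R v) - g1 (p + s *\<^sub>R u) - of_real t * L) \<le> t * (e / 2)"
          using inner[OF s] .
      qed
      moreover have "?m t - ?m 0 = (f (p + t *\<^sub>R u + t *\<^sub>R v) - f (p + t *\<^sub>R u) - f (p + t *\<^sub>R v) + f p)
        - of_real t * (of_real t * L)"
        by (simp add: algebra_simps)
      ultimately show ?thesis by metis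
    qed
    have "d / B > 0" using dpos B by simp
    then show "\<forall>\<^sub>F t in at_right 0. dist ((f (p + t *\<^sub>R u + t *\<^sub>R v) - f (p + t *\<^sub>R u) - f (p + t *\<^sub>R v) + f p) / (of_real t)\<^sup>2) L < e"
    proof (rule eventually_mono[OF eventually_at_right_real])
      fix t assume "t \<in> {0<..<d / B}"
      then have t: "0 < t" "t < d / B" by auto
      let ?D = "f (p + t *\<^sub>R u + t *\<^sub>R v) - f (p + t *\<^sub>R u) - f (p + t *\<^sub>R v) + f p"
      have "?D / (of_real t)\<^sup>2 - L = (?D - of_real t * (of_real t * L)) / of_real (t * t)"
        using t by (simp add: field_simps power2_eq_square)
      then have "dist (?D / (of_real t)\<^sup>2) L = norm (?D - of_real t * (of_real t * L)) / (t * t)"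
        using t by (simp add: dist_norm norm_divide norm_mult)
      also have "\<dots> \<le> (t * (t * (e/2))) / (t * t)"
        using key[OF t] t by (intro divide_right_mono) auto
      also have "\<dots> = e/2" using t by simp
      also have "\<dots> < e" using e by simp
      finally show "dist (?D / (of_real t)\<^sup>2) L < e" .
    qed
  qed
qed

lemma schwarz:
  assumes S: "open S" and p: "p \<in> S" and f: "f \<in> sm S"
  shows "dv v (\<lambda>q. dv u f q) p = dv u (\<lambda>q. dv v f q) p"
proof -
  have 1: "((\<lambda>t. (f (p + t *\<^sub>R u + t *\<^sub>R v) - f (p + t *\<^sub>R u) - f (p + t *\<^sub>R v) + f p) / (of_real t)^2)
     \<longlongrightarrow> dv v (\<lambda>q. dv u f q) p) (at_right 0)" by (rule schwarz_lim[OF S p f])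
  have 2: "((\<lambda>t. (f (p + t *\<^sub>R v + t *\<^sub>R u) - f (p + t *\<^sub>R v) - f (p + t *\<^sub>R u) + f p) / (of_real t)^2)
     \<longlongrightarrow> dv u (\<lambda>q. dv v f q) p) (at_right 0)" by (rule schwarz_lim[OF S p f])
  have e: "p + t *\<^sub>R v + t *\<^sub>R u = p + t *\<^sub>R u + t *\<^sub>R v" for t by (simp add: algebra_simps)
  have "((\<lambda>t. (f (p + t *\<^sub>R u + t *\<^sub>R v) - f (p + t *\<^sub>R u) - f (p + t *\<^sub>R v) + f p) / (of_real t)^2)
     \<longlongrightarrow> dv u (\<lambda>q. dv v f q) p) (at_right 0)"
    using 2 unfolding e by (simp add: algebra_simps)
  from tendsto_unique[OF trivial_limit_at_right_real 1 this] show ?thesis .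
qed


lemma dv_const: "dv v (\<lambda>q::'a::real_normed_vector. c) p = 0"
  using dv_eq[OF has_derivative_const[of c "at p"]] by simp

context
  fixes S :: "'a::real_normed_vector set"
  assumes S: "open S"
begin

lemma dv_add: "f \<in> sm S \<Longrightarrow> g \<in> sm S \<Longrightarrow> p \<in> S \<Longrightarrow> dv v (\<lambda>q. f q + g q) p = dv v f p + dv v g p"
proof -
  assume a: "f \<in> sm S" "g \<in> sm S" "p \<in> S"
  have "((\<lambda>q. f q + g q) has_derivative (\<lambda>h. dv h f p + dv h g p)) (at p)"
    by (intro has_derivative_add sm_hasd[OF S]) (use a in auto)
  from dv_eq[OF this] show ?thesis by simp
qed

lemma dv_mult: "f \<in> sm S \<Longrightarrow> g \<in> sm S \<Longrightarrow> p \<in> S \<Longrightarrow> dv v (\<lambda>q. f q * g q) p = f p * dv v g p + dv v f p * g p"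
proof -
  assume a: "f \<in> sm S" "g \<in> sm S" "p \<in> S"
  have "((\<lambda>q. f q * g q) has_derivative (\<lambda>h. f p * dv h g p + dv h f p * g p)) (at p)"
    by (intro has_derivative_mult sm_hasd[OF S]) (use a in auto)
  from dv_eq[OF this] show ?thesis by simp
qed

lemma dv_cnj: "f \<in> sm S \<Longrightarrow> p \<in> S \<Longrightarrow> dv v (\<lambda>q. cnj (f q)) p = cnj (dv v f p)"
proof -
  assume a: "f \<in> sm S" "p \<in> S"
  have "((\<lambda>q. cnj (f q)) has_derivative (\<lambda>h. cnj (dv h f p))) (at p)"
    by (intro has_derivative_cnj sm_hasd[OF S]) (use a in auto)
  from dv_eq[OF this] show ?thesis by simp
qed

lemma dv_sum: "finite A \<Longrightarrow> (\<And>i. i \<in> A \<Longrightarrow> f i \<in> sm S) \<Longrightarrow> p \<in> S \<Longrightarrow>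
    dv v (\<lambda>q. \<Sum>i\<in>A. f i q) p = (\<Sum>i\<in>A. dv v (f i) p)"
proof -
  assume a: "finite A" "\<And>i. i \<in> A \<Longrightarrow> f i \<in> sm S" "p \<in> S"
  have "((\<lambda>q. \<Sum>i\<in>A. f i q) has_derivative (\<lambda>h. \<Sum>i\<in>A. dv h (f i) p)) (at p)"
    by (intro has_derivative_sum sm_hasd[OF S]) (use a in auto)
  from dv_eq[OF this] show ?thesis by simp
qed

lemma dv_cmul: "f \<in> sm S \<Longrightarrow> p \<in> S \<Longrightarrow> dv v (\<lambda>q. c * f q) p = c * dv v f p"
proof -
  assume a: "f \<in> sm S" "p \<in> S"
  have "((\<lambda>q. c * f q) has_derivative (\<lambda>h. c * dv h f p)) (at p)"
    by (intro has_derivative_mult_right sm_hasd[OF S]) (use a in auto)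
  from dv_eq[OF this] show ?thesis by simp
qed

end

definition wop :: "complex \<Rightarrow> 'n option \<Rightarrow> ('n::finite pt \<Rightarrow> complex) \<Rightarrow> 'n pt \<Rightarrow> complex" where
  "wop c k f p = (dv (rdir k) f p + c * dv (idir k) f p) / 2"

lemma wirt_wop: "wirt k f = wop (- \<i>) k f"
  unfolding wirt_def wop_def dv_def by (simp add: fun_eq_iff)

lemma wirtb_wop: "wirt_bar k f = wop \<i> k f"
  unfolding wirt_bar_def wop_def dv_def by (simp add: fun_eq_iff)

context
  fixes S :: "'n::finite pt set"
  assumes S: "open S"
begin

lemma sm_wop: "f \<in> sm S \<Longrightarrow> wop c k f \<in> sm S"
proof -
  assume f: "f \<in> sm S"
  have "(\<lambda>p. (dv (rdir k) f p + c * dv (idir k) f p) * inverse 2) \<in> sm S"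
    by (intro sm_mult sm_add sm_const sm_dv[OF S f])
  then show ?thesis unfolding wop_def by (simp add: field_simps)
qed

lemma wop_cong: "p \<in> S \<Longrightarrow> (\<And>q. q \<in> S \<Longrightarrow> f q = g q) \<Longrightarrow> wop c k f p = wop c k g p"
  unfolding wop_def using dv_cong[OF S] by metis

lemma wop_add: "f \<in> sm S \<Longrightarrow> g \<in> sm S \<Longrightarrow> p \<in> S \<Longrightarrow>
    wop c k (\<lambda>q. f q + g q) p = wop c k f p + wop c k g p"
  unfolding wop_def by (simp add: dv_add[OF S] field_simps)

lemma wop_mult: "f \<in> sm S \<Longrightarrow> g \<in> sm S \<Longrightarrow> p \<in> S \<Longrightarrow>
    wop c k (\<lambda>q. f q * g q) p = f p * wop c k g p + wop c k f p * g p"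
  unfolding wop_def by (simp add: dv_mult[OF S] field_simps)

lemma wop_const: "wop c k (\<lambda>q. a) p = 0"
  unfolding wop_def by (simp add: dv_const)

lemma wop_cmul: "f \<in> sm S \<Longrightarrow> p \<in> S \<Longrightarrow> wop c k (\<lambda>q. a * f q) p = a * wop c k f p"
  unfolding wop_def by (simp add: dv_cmul[OF S] field_simps)

lemma wop_neg: "f \<in> sm S \<Longrightarrow> p \<in> S \<Longrightarrow> wop c k (\<lambda>q. - f q) p = - wop c k f p"
  using wop_cmul[of f p c k "-1"] by simp

lemma wop_diff: "f \<in> sm S \<Longrightarrow> g \<in> sm S \<Longrightarrow> p \<in> S \<Longrightarrow>
    wop c k (\<lambda>q. f q - g q) p = wop c k f p - wop c k g p"
  using wop_add[of f "\<lambda>q. - g q" p c k] wop_neg[of g p c k] sm_neg[of g S] by simp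

lemma wop_sum: "finite A \<Longrightarrow> (\<And>i. i \<in> A \<Longrightarrow> f i \<in> sm S) \<Longrightarrow> p \<in> S \<Longrightarrow>
    wop c k (\<lambda>q. \<Sum>i\<in>A. f i q) p = (\<Sum>i\<in>A. wop c k (f i) p)"
  unfolding wop_def by (simp add: dv_sum[OF S] sum_distrib_left sum.distrib flip: sum_divide_distrib)

lemma wop_cnj: "f \<in> sm S \<Longrightarrow> p \<in> S \<Longrightarrow> wop c k (\<lambda>q. cnj (f q)) p = cnj (wop (cnj c) k f p)"
  unfolding wop_def by (simp add: dv_cnj[OF S])

lemma dv_comb: "a \<in> sm S \<Longrightarrow> b \<in> sm S \<Longrightarrow> p \<in> S \<Longrightarrow>
    dv v (\<lambda>q. (a q + c * b q) / 2) p = (dv v a p + c * dv v b p) / 2"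
proof -
  assume ab: "a \<in> sm S" "b \<in> sm S" "p \<in> S"
  have "((\<lambda>q. (a q + c * b q) / 2) has_derivative (\<lambda>h. (dv h a p + c * dv h b p) / 2)) (at p)"
    by (intro bounded_linear.has_derivative[OF bounded_linear_divide] has_derivative_add
        has_derivative_mult_right sm_hasd[OF S]) (use ab in auto)
  from dv_eq[OF this] show ?thesis by simp
qed

lemma wop_comm: "f \<in> sm S \<Longrightarrow> p \<in> S \<Longrightarrow> wop c k (wop c' l f) p = wop c' l (wop c k f) p"
proof -
  assume f: "f \<in> sm S" and p: "p \<in> S"
  have d: "\<And>v. (\<lambda>q. dv v f q) \<in> sm S" using sm_dv[OF S f] .
  have w: "wop c' l f = (\<lambda>q. (dv (rdir l) f q + c' * dv (idir l) f q) / 2)" for c' l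
    by (simp add: wop_def fun_eq_iff)
  have sw: "dv v (dv w f) p = dv w (dv v f) p" for v w using schwarz[OF S p f, of w v] by simp
  show ?thesis
    unfolding w unfolding wop_def
    by (simp add: dv_comb[OF d d p] sw field_simps)
qed

end


lemma sum_option: fixes f :: "'n::finite option \<Rightarrow> 'b::comm_monoid_add"
  shows "(\<Sum>i\<in>UNIV. f i) = f None + (\<Sum>a\<in>UNIV. f (Some a))"
  unfolding UNIV_option_conv by (subst sum.insert) (auto simp: sum.reindex)

lemma kernel_det: fixes A :: "'a::field^'m^'m"
  assumes "\<And>y. A *v y = 0 \<Longrightarrow> y = 0" shows "det A \<noteq> 0"
proof -
  have "inj ((*v) A)"
  proof (rule injI)
    fix x y assume "A *v x = A *v y"
    then have "A *v (x - y) = 0" by (simp add: matrix_vector_mult_diff_distrib)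
    then have "x - y = 0" using assms by blast
    then show "x = y" by simp
  qed
  then show ?thesis using det_nz_iff_inj_gen[OF matrix_vector_mul_linear_gen, of A] by simp
qed

lemma herm_inj: assumes "herm_pos A" "A *v z = 0" shows "z = 0"
proof -
  define v where "v = (\<chi> i. cnj (z $ i))"
  have t: "\<And>i j. A $ i $ j * v $ i * cnj (v $ j) = v $ i * (A $ i $ j * z $ j)" by (simp add: v_def)
  have "(\<Sum>i\<in>UNIV. \<Sum>j\<in>UNIV. A $ i $ j * v $ i * cnj (v $ j)) = (\<Sum>i\<in>UNIV. v $ i * (\<Sum>j\<in>UNIV. A $ i $ j * z $ j))"
    unfolding t by (simp add: sum_distrib_left)
  also have "\<dots> = (\<Sum>i\<in>UNIV. v $ i * (A *v z) $ i)" by (simp add: matrix_vector_mult_def)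
  also have "\<dots> = 0" using assms(2) by simp
  finally have s0: "(\<Sum>i\<in>UNIV. \<Sum>j\<in>UNIV. A $ i $ j * v $ i * cnj (v $ j)) = 0" .
  have "v = 0"
  proof (rule ccontr)
    assume "v \<noteq> 0"
    with assms(1) have "Re (\<Sum>i\<in>UNIV. \<Sum>j\<in>UNIV. A $ i $ j * v $ i * cnj (v $ j)) > 0"
      unfolding herm_pos_def by blast
    with s0 show False by simp
  qed
  then show "z = 0" by (simp add: vec_eq_iff v_def)
qed

lemma minv: fixes A :: "'a::field^'n^'n" assumes "det A \<noteq> 0"
  shows "A ** matrix_inv A = mat 1" "matrix_inv A ** A = mat 1"
proof -
  have "\<exists>A'. A ** A' = mat 1 \<and> A' ** A = mat 1"
    using invertible_det_nz[of A] assms unfolding invertible_def by blast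
  from someI_ex[OF this] show "A ** matrix_inv A = mat 1" "matrix_inv A ** A = mat 1"
    unfolding matrix_inv_def by auto
qed

lemma minv_entry: fixes A :: "'a::field^'n^'n" assumes d: "det A \<noteq> 0"
  shows "matrix_inv A $ k $ j = det (\<chi> i l. if l = k then axis j 1 $ i else A $ i $ l) / det A"
proof -
  let ?x = "\<chi> k. matrix_inv A $ k $ j"
  have "(A ** matrix_inv A) $ i $ j = mat 1 $ i $ j" for i using minv(1)[OF d] by simp
  then have "A *v ?x = axis j 1"
    by (simp add: vec_eq_iff matrix_vector_mult_def matrix_matrix_mult_def mat_def axis_def)
  then have "?x = (\<chi> k. det (\<chi> i l. if l = k then axis j 1 $ i else A $ i $ l) / det A)"
    using cramer[OF d] by blast
  then have "?x $ k = (\<chi> k. det (\<chi> i l. if l = k then axis j 1 $ i else A $ i $ l) / det A) $ k"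
    by simp
  then show ?thesis by simp
qed

lemma sm_det: assumes "\<And>i j. (\<lambda>q. M q $ i $ j) \<in> sm S" shows "(\<lambda>q. det (M q)) \<in> sm S"
  unfolding det_def
  by (intro sm_sum sm_mult sm_const sm_prod assms) (simp_all add: finite_permutations)

locale geo =
  fixes Sig :: "complex set" and U :: "(complex^'n::finite) set"
    and g0 :: "complex^'n \<Rightarrow> complex^'n^'n" and phi :: "'n pt \<Rightarrow> real"
  assumes oSig: "open Sig" and conSig: "connected Sig" and oU: "open U"
    and g0sm: "\<forall>a b. smooth_on (Sig \<times> U) (\<lambda>q. g0 (snd q) $ a $ b)"
    and g0herm: "\<forall>w\<in>U. herm_pos (g0 w)"
    and kahler: "\<forall>p\<in>Sig \<times> U. \<forall>a b c.
           wirt (Some c) (\<lambda>q. g0 (snd q) $ a $ b) p = wirt (Some a) (\<lambda>q. g0 (snd q) $ c $ b) p"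
    and phism: "smooth_on (Sig \<times> U) (phic phi)"
    and gpos: "\<forall>p\<in>Sig \<times> U. herm_pos (gmet g0 phi p)"
    and degen: "\<forall>p\<in>Sig \<times> U. det (cmat g0 phi p) = 0"
begin

abbreviation "SS \<equiv> Sig \<times> U"
abbreviation "W \<equiv> wop (- \<i>)"
abbreviation "Wb \<equiv> wop \<i>"
abbreviation "Phi \<equiv> phic phi"
abbreviation G :: "'n \<Rightarrow> 'n \<Rightarrow> 'n pt \<Rightarrow> complex" where "G a b \<equiv> (\<lambda>q. gmet g0 phi q $ a $ b)"
abbreviation Gi :: "'n \<Rightarrow> 'n \<Rightarrow> 'n pt \<Rightarrow> complex" where "Gi a b \<equiv> (\<lambda>q. ginv g0 phi q $ a $ b)"
abbreviation et :: "'n \<Rightarrow> 'n pt \<Rightarrow> complex" where "et a \<equiv> eta g0 phi a"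
abbreviation ce :: "'n \<Rightarrow> 'n pt \<Rightarrow> complex" where "ce a \<equiv> (\<lambda>q. cnj (eta g0 phi a q))"
abbreviation gf :: "'n \<Rightarrow> 'n \<Rightarrow> 'n pt \<Rightarrow> complex" where "gf a b \<equiv> (\<lambda>q. g0 (snd q) $ a $ b)"
abbreviation ps :: "'n \<Rightarrow> 'n pt \<Rightarrow> complex" where "ps b \<equiv> W None (Wb (Some b) Phi)"

lemma oS: "open SS" using oSig oU open_Times by blast

lemma gmet_eq: "gmet g0 phi q $ a $ b = gf a b q + W (Some a) (Wb (Some b) Phi) q"
  by (simp add: gmet_def wirt_wop wirtb_wop)

lemma eta_eq: "et a q = - (\<Sum>b\<in>UNIV. Gi a b q * ps b q)"
  by (simp add: eta_def wirt_wop wirtb_wop)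

lemma Phi_sm: "Phi \<in> sm SS" using phism by (rule sm_base)
lemma gf_sm: "gf a b \<in> sm SS" using g0sm sm_base by blast

lemma W_sm: "f \<in> sm SS \<Longrightarrow> wop c k f \<in> sm SS" by (rule sm_wop[OF oS])

lemma G_sm: "G a b \<in> sm SS"
proof -
  have "(\<lambda>q. gf a b q + W (Some a) (Wb (Some b) Phi) q) \<in> sm SS"
    by (intro sm_add gf_sm W_sm Phi_sm)
  then show ?thesis by (simp add: gmet_eq)
qed

lemma detG: "q \<in> SS \<Longrightarrow> det (gmet g0 phi q) \<noteq> 0"
  by (rule kernel_det) (use herm_inj gpos in blast)

lemma inv1: "q \<in> SS \<Longrightarrow> (\<Sum>b\<in>UNIV. Gi a b q * G c b q) = (if a = c then 1 else 0)"
proof -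
  assume q: "q \<in> SS"
  have "det (transpose (gmet g0 phi q)) \<noteq> 0" using detG[OF q] by simp
  from minv(2)[OF this] have "(matrix_inv (transpose (gmet g0 phi q)) ** transpose (gmet g0 phi q)) $ a $ c = mat 1 $ a $ c"
    by simp
  then show ?thesis by (simp add: ginv_def matrix_matrix_mult_def transpose_def mat_def)
qed

lemma inv2: "q \<in> SS \<Longrightarrow> (\<Sum>a\<in>UNIV. G a b q * Gi a c q) = (if b = c then 1 else 0)"
proof -
  assume q: "q \<in> SS"
  have "det (transpose (gmet g0 phi q)) \<noteq> 0" using detG[OF q] by simp
  from minv(1)[OF this] have "(transpose (gmet g0 phi q) ** matrix_inv (transpose (gmet g0 phi q))) $ b $ c = mat 1 $ b $ c"
    by simp
  then show ?thesis by (simp add: ginv_def matrix_matrix_mult_def transpose_def mat_def)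
qed

lemma detG_sm: "(\<lambda>q. det (transpose (gmet g0 phi q))) \<in> sm SS"
  by (rule sm_det) (simp add: transpose_def G_sm)

lemma Gi_sm: "Gi a b \<in> sm SS"
proof -
  let ?M = "\<lambda>q. (\<chi> i l. if l = a then axis b 1 $ i else transpose (gmet g0 phi q) $ i $ l) :: complex^'n^'n"
  have e: "q \<in> SS \<Longrightarrow> Gi a b q = det (?M q) * inverse (det (transpose (gmet g0 phi q)))" for q
    unfolding ginv_def using minv_entry[of "transpose (gmet g0 phi q)" a b] detG[of q]
    by (simp add: field_simps)
  have ent: "(\<lambda>q. ?M q $ i $ j) \<in> sm SS" for i j
  proof (cases "j = a")
    case True then show ?thesis using sm_const by simp
  next
    case False then show ?thesis by (simp add: transpose_def G_sm)
  qed
  have "(\<lambda>q. det (?M q) * inverse (det (transpose (gmet g0 phi q)))) \<in> sm SS"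
    by (intro sm_mult sm_det ent sm_inv sm_smooth[OF oS] detG_sm) (use detG in simp)
  then show ?thesis by (rule sm_cong) (use e in simp)
qed

lemma ps_sm: "ps b \<in> sm SS" by (intro W_sm Phi_sm)

lemma et_sm: "et a \<in> sm SS"
proof -
  have "(\<lambda>q. - (\<Sum>b\<in>UNIV. Gi a b q * ps b q)) \<in> sm SS"
    by (intro sm_neg sm_sum sm_mult Gi_sm ps_sm) simp
  then show ?thesis by (simp add: eta_eq[abs_def])
qed

lemma ce_sm: "ce a \<in> sm SS" by (intro sm_cnj et_sm)

end


lemma dv_const_dir:
  assumes S: "open S" and f: "f \<in> sm S" and q: "q \<in> S" and c: "\<And>s. f (q + s *\<^sub>R w) = f q"
  shows "dv w f q = 0"
proof -
  have "((\<lambda>s. f (q + s *\<^sub>R w)) has_derivative (\<lambda>h. of_real h * dv w f (q + 0 *\<^sub>R w))) (at 0)"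
    by (rule line_deriv[OF S f]) (simp add: q)
  moreover have "((\<lambda>s. f (q + s *\<^sub>R w)) has_derivative (\<lambda>h. 0)) (at (0::real))"
    unfolding c by simp
  ultimately have "(\<lambda>h. of_real h * dv w f (q + 0 *\<^sub>R w)) = (\<lambda>h::real. 0)"
    by (rule has_derivative_unique)
  then have "of_real 1 * dv w f (q + 0 *\<^sub>R w) = 0" by metis
  then show ?thesis by simp
qed

context geo
begin

lemma wop_zero: "q \<in> SS \<Longrightarrow> (\<And>q'. q' \<in> SS \<Longrightarrow> f q' = 0) \<Longrightarrow> wop c k f q = 0"
  using wop_cong[OF oS, of q f "\<lambda>q. 0" c k] wop_const[OF oS] by simp

lemma gf_z: "q \<in> SS \<Longrightarrow> wop c None (gf a b) q = 0"
proof -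
  assume q: "q \<in> SS"
  have "dv w (gf a b) q = 0" if "snd w = 0" for w
    by (rule dv_const_dir[OF oS gf_sm q]) (simp add: that)
  then show ?thesis unfolding wop_def by (simp add: rdir_def idir_def)
qed

lemma gf_kahler: "q \<in> SS \<Longrightarrow> W (Some c) (gf a b) q = W (Some a) (gf c b) q"
proof -
  assume q: "q \<in> SS"
  from kahler q have "wirt (Some c) (gf a b) q = wirt (Some a) (gf c b) q" by blast
  then show ?thesis by (simp add: wirt_wop)
qed

lemma gf_herm: "q \<in> SS \<Longrightarrow> gf b a q = cnj (gf a b q)"
proof -
  assume "q \<in> SS"
  then have "snd q \<in> U" by (auto simp: mem_Times_iff)
  then have "herm_pos (g0 (snd q))" using g0herm by blast
  then show ?thesis unfolding herm_pos_def by blast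
qed

lemma G_herm: "q \<in> SS \<Longrightarrow> G b a q = cnj (G a b q)"
  using gpos unfolding herm_pos_def by blast

lemma cnj_Phi: "(\<lambda>q. cnj (Phi q)) = Phi"
  by (simp add: phic_def fun_eq_iff)

lemma gf_bar: "q \<in> SS \<Longrightarrow> Wb (Some \<beta>) (gf \<gamma> a) q = Wb (Some a) (gf \<gamma> \<beta>) q"
proof -
  assume q: "q \<in> SS"
  have "Wb (Some \<beta>) (gf \<gamma> a) q = Wb (Some \<beta>) (\<lambda>q. cnj (gf a \<gamma> q)) q"
    by (rule wop_cong[OF oS q]) (metis gf_herm)
  also have "\<dots> = cnj (W (Some \<beta>) (gf a \<gamma>) q)" by (simp add: wop_cnj[OF oS gf_sm q])
  also have "\<dots> = cnj (W (Some a) (gf \<beta> \<gamma>) q)" using gf_kahler[OF q, of \<beta> a \<gamma>] by simp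
  also have "\<dots> = Wb (Some a) (\<lambda>q. cnj (gf \<beta> \<gamma> q)) q" by (simp add: wop_cnj[OF oS gf_sm q])
  also have "\<dots> = Wb (Some a) (gf \<gamma> \<beta>) q"
    by (rule wop_cong[OF oS q]) (metis gf_herm)
  finally show ?thesis .
qed

lemma comm: "f \<in> sm SS \<Longrightarrow> q \<in> SS \<Longrightarrow> wop c k (wop c' l f) q = wop c' l (wop c k f) q"
  by (rule wop_comm[OF oS])

lemma WWb_sm: "wop c k (wop c' l Phi) \<in> sm SS" by (intro W_sm Phi_sm)

lemma G_kahler: "q \<in> SS \<Longrightarrow> W (Some a) (G \<gamma> d) q = W (Some \<gamma>) (G a d) q"
proof -
  assume q: "q \<in> SS"
  have "W (Some a) (G \<gamma> d) q = W (Some a) (gf \<gamma> d) q + W (Some a) (W (Some \<gamma>) (Wb (Some d) Phi)) q"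
    unfolding gmet_eq by (rule wop_add[OF oS gf_sm WWb_sm q])
  also have "\<dots> = W (Some \<gamma>) (gf a d) q + W (Some \<gamma>) (W (Some a) (Wb (Some d) Phi)) q"
    using gf_kahler[OF q, of a \<gamma> d] comm[OF W_sm[OF Phi_sm] q] by simp
  also have "\<dots> = W (Some \<gamma>) (G a d) q"
    unfolding gmet_eq by (rule wop_add[OF oS gf_sm WWb_sm q, symmetric])
  finally show ?thesis .
qed

lemma Wb_swap: "q \<in> SS \<Longrightarrow> wop c k (wop c' m (wop c l Phi)) q = wop c l (wop c' m (wop c k Phi)) q"
proof -
  assume q: "q \<in> SS"
  have "wop c k (wop c' m (wop c l Phi)) q = wop c' m (wop c k (wop c l Phi)) q"
    by (rule comm[OF W_sm[OF Phi_sm] q])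
  also have "\<dots> = wop c' m (wop c l (wop c k Phi)) q"
    by (rule wop_cong[OF oS q]) (rule comm[OF Phi_sm])
  also have "\<dots> = wop c l (wop c' m (wop c k Phi)) q"
    by (rule comm[OF W_sm[OF Phi_sm] q, symmetric])
  finally show ?thesis .
qed

lemma G_bar: "q \<in> SS \<Longrightarrow> Wb (Some \<beta>) (G \<gamma> a) q = Wb (Some a) (G \<gamma> \<beta>) q"
proof -
  assume q: "q \<in> SS"
  have "Wb (Some \<beta>) (G \<gamma> a) q = Wb (Some \<beta>) (gf \<gamma> a) q + Wb (Some \<beta>) (W (Some \<gamma>) (Wb (Some a) Phi)) q"
    unfolding gmet_eq by (rule wop_add[OF oS gf_sm WWb_sm q])
  also have "\<dots> = Wb (Some a) (gf \<gamma> \<beta>) q + Wb (Some a) (W (Some \<gamma>) (Wb (Some \<beta>) Phi)) q"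
    using gf_bar[OF q, of \<beta> \<gamma> a] Wb_swap[OF q, of \<i> "Some \<beta>" "- \<i>" "Some \<gamma>" "Some a"] by simp
  also have "\<dots> = Wb (Some a) (G \<gamma> \<beta>) q"
    unfolding gmet_eq by (rule wop_add[OF oS gf_sm WWb_sm q, symmetric])
  finally show ?thesis .
qed

lemma K1: "q \<in> SS \<Longrightarrow> ps b q = - (\<Sum>a\<in>UNIV. G a b q * et a q)"
proof -
  assume q: "q \<in> SS"
  have "(\<Sum>a\<in>UNIV. G a b q * et a q) = - (\<Sum>a\<in>UNIV. \<Sum>c\<in>UNIV. G a b q * (Gi a c q * ps c q))"
    by (simp add: eta_eq sum_distrib_left sum_negf)
  also have "\<dots> = - (\<Sum>c\<in>UNIV. \<Sum>a\<in>UNIV. G a b q * (Gi a c q * ps c q))"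
    by (subst sum.swap) simp
  also have "\<dots> = - (\<Sum>c\<in>UNIV. (\<Sum>a\<in>UNIV. G a b q * Gi a c q) * ps c q)"
    by (simp add: sum_distrib_right mult.assoc)
  also have "\<dots> = - (\<Sum>c\<in>UNIV. (if b = c then ps c q else 0))"
    by (rule arg_cong[where f=uminus], rule sum.cong) (simp_all add: inv2[OF q])
  also have "\<dots> = - ps b q" by simp
  finally show ?thesis by simp
qed

lemma K2: "q \<in> SS \<Longrightarrow> W (Some \<gamma>) (Wb None Phi) q = - (\<Sum>a\<in>UNIV. G \<gamma> a q * ce a q)"
proof -
  assume q: "q \<in> SS"
  have "cnj (ps \<gamma> q) = Wb None (\<lambda>q. cnj (Wb (Some \<gamma>) Phi q)) q"
    by (simp add: wop_cnj[OF oS W_sm[OF Phi_sm] q])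
  also have "\<dots> = Wb None (W (Some \<gamma>) Phi) q"
  proof (rule wop_cong[OF oS q])
    fix q' assume q': "q' \<in> SS"
    show "cnj (Wb (Some \<gamma>) Phi q') = W (Some \<gamma>) Phi q'"
      using wop_cnj[OF oS Phi_sm q', of "- \<i>" "Some \<gamma>"] cnj_Phi by simp
  qed
  also have "\<dots> = W (Some \<gamma>) (Wb None Phi) q" by (rule comm[OF Phi_sm q])
  finally have 1: "cnj (ps \<gamma> q) = W (Some \<gamma>) (Wb None Phi) q" .
  have "cnj (ps \<gamma> q) = - (\<Sum>a\<in>UNIV. cnj (G a \<gamma> q) * ce a q)" by (simp add: K1[OF q])
  also have "\<dots> = - (\<Sum>a\<in>UNIV. G \<gamma> a q * ce a q)"
  proof -
    have h: "\<And>a. cnj (G a \<gamma> q) = G \<gamma> a q" using G_herm[OF q] by metis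
    show ?thesis by (simp only: h)
  qed
  finally show ?thesis using 1 by simp
qed

end


definition LD :: "complex \<Rightarrow> ('n \<Rightarrow> 'n::finite pt \<Rightarrow> complex) \<Rightarrow> ('n pt \<Rightarrow> complex) \<Rightarrow> 'n pt \<Rightarrow> complex" where
  "LD c0 \<kappa> h q = wop c0 None h q + (\<Sum>c\<in>UNIV. \<kappa> c q * wop c0 (Some c) h q)"

context
  fixes S :: "'n::finite pt set"
  assumes S: "open S"
begin

lemma LD_cong: "p \<in> S \<Longrightarrow> (\<And>q. q \<in> S \<Longrightarrow> f q = g q) \<Longrightarrow> LD c0 \<kappa> f p = LD c0 \<kappa> g p"
proof -
  assume p: "p \<in> S" and e: "\<And>q. q \<in> S \<Longrightarrow> f q = g q"
  have "\<And>k. wop c0 k f p = wop c0 k g p" by (rule wop_cong[OF S p]) (erule e)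
  then show ?thesis by (simp add: LD_def)
qed

lemma LD_mult: "f \<in> sm S \<Longrightarrow> g \<in> sm S \<Longrightarrow> p \<in> S \<Longrightarrow>
    LD c0 \<kappa> (\<lambda>q. f q * g q) p = f p * LD c0 \<kappa> g p + LD c0 \<kappa> f p * g p"
  unfolding LD_def by (simp add: wop_mult[OF S] sum.distrib sum_distrib_left sum_distrib_right algebra_simps)

lemma LD_neg: "f \<in> sm S \<Longrightarrow> p \<in> S \<Longrightarrow> LD c0 \<kappa> (\<lambda>q. - f q) p = - LD c0 \<kappa> f p"
  unfolding LD_def by (simp add: wop_neg[OF S] sum_negf)

lemma LD_sum: "(\<And>i. f i \<in> sm S) \<Longrightarrow> p \<in> S \<Longrightarrow>
    LD c0 \<kappa> (\<lambda>q. \<Sum>i\<in>(UNIV::'m::finite set). f i q) p = (\<Sum>i\<in>UNIV. LD c0 \<kappa> (f i) p)"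
proof -
  assume f: "\<And>i. f i \<in> sm S" and p: "p \<in> S"
  have "LD c0 \<kappa> (\<lambda>q. \<Sum>i\<in>(UNIV::'m set). f i q) p =
     (\<Sum>i\<in>UNIV. wop c0 None (f i) p) + (\<Sum>c\<in>UNIV. \<Sum>i\<in>UNIV. \<kappa> c p * wop c0 (Some c) (f i) p)"
    unfolding LD_def by (simp add: wop_sum[OF S _ f p] sum_distrib_left)
  also have "\<dots> = (\<Sum>i\<in>UNIV. wop c0 None (f i) p) + (\<Sum>i\<in>UNIV. \<Sum>c\<in>UNIV. \<kappa> c p * wop c0 (Some c) (f i) p)"
    by (subst sum.swap) simp
  also have "\<dots> = (\<Sum>i\<in>UNIV. LD c0 \<kappa> (f i) p)"
    unfolding LD_def by (simp add: sum.distrib)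
  finally show ?thesis .
qed

end

context geo
begin

lemma cm_NN: "cmat g0 phi q $ None $ None = W None (Wb None Phi) q"
  by (simp add: cmat_def wirt_wop wirtb_wop)
lemma cm_NS: "cmat g0 phi q $ None $ Some b = ps b q"
  by (simp add: cmat_def wirt_wop wirtb_wop)
lemma cm_SN: "cmat g0 phi q $ Some a $ None = W (Some a) (Wb None Phi) q"
  by (simp add: cmat_def wirt_wop wirtb_wop)
lemma cm_SS: "cmat g0 phi q $ Some a $ Some b = G a b q"
  by (simp add: cmat_def wirt_wop wirtb_wop gmet_eq)

lemma E: "q \<in> SS \<Longrightarrow> W None (Wb None Phi) q + (\<Sum>b\<in>UNIV. ps b q * ce b q) = 0"
proof (rule ccontr)
  assume q: "q \<in> SS" and nz: "W None (Wb None Phi) q + (\<Sum>b\<in>UNIV. ps b q * ce b q) \<noteq> 0"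
  have "det (cmat g0 phi q) \<noteq> 0"
  proof (rule kernel_det)
    fix y assume y: "cmat g0 phi q *v y = 0"
    have row: "(\<Sum>j\<in>UNIV. cmat g0 phi q $ i $ j * y $ j) = 0" for i
      using arg_cong[OF y, of "\<lambda>v. v $ i"] by (simp add: matrix_vector_mult_def)
    define t where "t = y $ None"
    have rowS: "W (Some a) (Wb None Phi) q * t + (\<Sum>b\<in>UNIV. G a b q * y $ Some b) = 0" for a
      using row[of "Some a"] unfolding sum_option cm_SN cm_SS t_def .
    have rowN: "W None (Wb None Phi) q * t + (\<Sum>b\<in>UNIV. ps b q * y $ Some b) = 0"
      using row[of None] unfolding sum_option cm_NN cm_NS t_def .
    define z where "z = (\<chi> b. y $ Some b - t * ce b q)"
    have "gmet g0 phi q *v z = 0"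
    proof -
      have "(gmet g0 phi q *v z) $ a = 0" for a
      proof -
        have "(gmet g0 phi q *v z) $ a = (\<Sum>b\<in>UNIV. G a b q * y $ Some b - t * (G a b q * ce b q))"
          by (simp add: matrix_vector_mult_def z_def right_diff_distrib mult.left_commute)
        also have "\<dots> = (\<Sum>b\<in>UNIV. G a b q * y $ Some b) - t * (\<Sum>b\<in>UNIV. G a b q * ce b q)"
          by (simp add: sum_subtractf sum_distrib_left)
        also have "\<dots> = (\<Sum>b\<in>UNIV. G a b q * y $ Some b) + W (Some a) (Wb None Phi) q * t"
          by (simp add: K2[OF q])
        also have "\<dots> = 0" using rowS[of a] by (simp add: add.commute)
        finally show ?thesis .
      qed
      then show ?thesis by (simp add: vec_eq_iff)
    qed
    then have "z = 0" using herm_inj gpos q by blast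
    then have yS: "y $ Some b = t * ce b q" for b
      unfolding z_def vec_eq_iff by simp
    have "(\<Sum>b\<in>UNIV. ps b q * y $ Some b) = t * (\<Sum>b\<in>UNIV. ps b q * ce b q)"
      by (simp add: yS sum_distrib_left mult.left_commute)
    then have "t * (W None (Wb None Phi) q + (\<Sum>b\<in>UNIV. ps b q * ce b q)) = 0"
      using rowN by (simp add: distrib_left mult.commute)
    then have t0: "t = 0" using nz by simp
    show "y = 0"
    proof (subst vec_eq_iff, rule allI)
      fix i show "y $ i = 0 $ i"
        by (cases i) (simp_all add: t0 yS t_def[symmetric])
    qed
  qed
  with degen q show False by blast
qed

end


lemma lin1: fixes x a b :: complex assumes "x + (a + b) = 0" shows "x = - a - b"
proof -
  have "x = (x + (a + b)) - a - b" by simp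
  then show ?thesis using assms by simp
qed

context geo
begin

lemma W_negsum_mult:
  assumes q: "q \<in> SS" and A: "\<And>i. A i \<in> sm SS" and B: "\<And>i. B i \<in> sm SS"
  shows "wop c k (\<lambda>q. - (\<Sum>i\<in>(UNIV::'m::finite set). A i q * B i q)) q
       = - (\<Sum>i\<in>UNIV. A i q * wop c k (B i) q + wop c k (A i) q * B i q)"
proof -
  have sm1: "(\<lambda>q. \<Sum>i\<in>(UNIV::'m set). A i q * B i q) \<in> sm SS"
    by (intro sm_sum sm_mult A B) simp
  have "wop c k (\<lambda>q. - (\<Sum>i\<in>(UNIV::'m set). A i q * B i q)) q = - wop c k (\<lambda>q. \<Sum>i\<in>(UNIV::'m set). A i q * B i q) q"
    by (rule wop_neg[OF oS sm1 q])
  also have "wop c k (\<lambda>q. \<Sum>i\<in>(UNIV::'m set). A i q * B i q) q = (\<Sum>i\<in>UNIV. wop c k (\<lambda>q. A i q * B i q) q)"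
    by (rule wop_sum[OF oS]) (auto intro: sm_mult A B q)
  also have "\<dots> = (\<Sum>i\<in>UNIV. A i q * wop c k (B i) q + wop c k (A i) q * B i q)"
    by (rule sum.cong[OF refl]) (rule wop_mult[OF oS A B q])
  finally show ?thesis .
qed

lemma smPC: "(\<lambda>q. \<Sum>b\<in>UNIV. ps b q * ce b q) \<in> sm SS"
  by (intro sm_sum sm_mult ps_sm ce_sm) simp

lemma DBps: assumes q: "q \<in> SS"
  shows "LD \<i> ce (ps \<beta>) q = (\<Sum>b\<in>UNIV. (\<Sum>\<gamma>\<in>UNIV. G \<gamma> b q * et \<gamma> q) * Wb (Some \<beta>) (ce b) q)"
proof -
  have A1: "Wb (Some \<beta>) (\<lambda>q. \<Sum>b\<in>UNIV. ps b q * ce b q) q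
      = (\<Sum>b\<in>UNIV. ps b q * Wb (Some \<beta>) (ce b) q + Wb (Some \<beta>) (ps b) q * ce b q)"
  proof -
    have "Wb (Some \<beta>) (\<lambda>q. \<Sum>b\<in>UNIV. ps b q * ce b q) q = (\<Sum>b\<in>UNIV. Wb (Some \<beta>) (\<lambda>q. ps b q * ce b q) q)"
      by (rule wop_sum[OF oS]) (auto intro: sm_mult ps_sm ce_sm q)
    also have "\<dots> = (\<Sum>b\<in>UNIV. ps b q * Wb (Some \<beta>) (ce b) q + Wb (Some \<beta>) (ps b) q * ce b q)"
      by (rule sum.cong[OF refl]) (rule wop_mult[OF oS ps_sm ce_sm q])
    finally show ?thesis .
  qed
  have Z: "Wb (Some \<beta>) (\<lambda>q. W None (Wb None Phi) q + (\<Sum>b\<in>UNIV. ps b q * ce b q)) q = 0"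
    by (rule wop_zero[OF q]) (rule E)
  have A0: "Wb (Some \<beta>) (W None (Wb None Phi)) q
     = - (\<Sum>b\<in>UNIV. ps b q * Wb (Some \<beta>) (ce b) q) - (\<Sum>b\<in>UNIV. Wb (Some \<beta>) (ps b) q * ce b q)"
  proof -
    have "Wb (Some \<beta>) (W None (Wb None Phi)) q + ((\<Sum>b\<in>UNIV. ps b q * Wb (Some \<beta>) (ce b) q) + (\<Sum>b\<in>UNIV. Wb (Some \<beta>) (ps b) q * ce b q)) = 0"
      using Z unfolding wop_add[OF oS WWb_sm smPC q] A1 sum.distrib .
    then show ?thesis by (rule lin1)
  qed
  have sw1: "Wb None (ps \<beta>) q = Wb (Some \<beta>) (W None (Wb None Phi)) q" by (rule Wb_swap[OF q])
  have sw2: "Wb (Some c) (ps \<beta>) q = Wb (Some \<beta>) (ps c) q" for c by (rule Wb_swap[OF q])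
  have "LD \<i> ce (ps \<beta>) q = Wb (Some \<beta>) (W None (Wb None Phi)) q + (\<Sum>c\<in>UNIV. ce c q * Wb (Some \<beta>) (ps c) q)"
    unfolding LD_def sw1 sw2 ..
  also have "(\<Sum>c\<in>UNIV. ce c q * Wb (Some \<beta>) (ps c) q) = (\<Sum>b\<in>UNIV. Wb (Some \<beta>) (ps b) q * ce b q)"
    by (simp add: mult.commute)
  finally have "LD \<i> ce (ps \<beta>) q = - (\<Sum>b\<in>UNIV. ps b q * Wb (Some \<beta>) (ce b) q)"
    unfolding A0 by simp
  also have "\<dots> = (\<Sum>b\<in>UNIV. (\<Sum>\<gamma>\<in>UNIV. G \<gamma> b q * et \<gamma> q) * Wb (Some \<beta>) (ce b) q)"
    by (simp add: K1[OF q] sum_negf)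
  finally show ?thesis .
qed

lemma DBG: assumes q: "q \<in> SS"
  shows "LD \<i> ce (G \<gamma> \<beta>) q = - (\<Sum>a\<in>UNIV. G \<gamma> a q * Wb (Some \<beta>) (ce a) q)"
proof -
  have "Wb None (G \<gamma> \<beta>) q = Wb None (gf \<gamma> \<beta>) q + Wb None (W (Some \<gamma>) (Wb (Some \<beta>) Phi)) q"
    unfolding gmet_eq by (rule wop_add[OF oS gf_sm WWb_sm q])
  also have "\<dots> = Wb (Some \<beta>) (W (Some \<gamma>) (Wb None Phi)) q"
    using gf_z[OF q] Wb_swap[OF q, of \<i> None "- \<i>" "Some \<gamma>" "Some \<beta>"] by simp
  also have "\<dots> = Wb (Some \<beta>) (\<lambda>q. - (\<Sum>a\<in>UNIV. G \<gamma> a q * ce a q)) q"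
    by (rule wop_cong[OF oS q]) (rule K2)
  also have "\<dots> = - (\<Sum>a\<in>UNIV. G \<gamma> a q * Wb (Some \<beta>) (ce a) q + Wb (Some \<beta>) (G \<gamma> a) q * ce a q)"
    by (rule W_negsum_mult[OF q G_sm ce_sm])
  also have "\<dots> = - (\<Sum>a\<in>UNIV. G \<gamma> a q * Wb (Some \<beta>) (ce a) q) - (\<Sum>a\<in>UNIV. ce a q * Wb (Some a) (G \<gamma> \<beta>) q)"
    by (simp add: sum.distrib G_bar[OF q] mult.commute)
  finally show ?thesis unfolding LD_def by simp
qed

lemma M1a: assumes q: "q \<in> SS"
  shows "(\<Sum>\<gamma>\<in>UNIV. G \<gamma> \<beta> q * LD \<i> ce (et \<gamma>) q) = 0"
proof -
  have "LD \<i> ce (ps \<beta>) q = LD \<i> ce (\<lambda>q. - (\<Sum>\<gamma>\<in>UNIV. G \<gamma> \<beta> q * et \<gamma> q)) q"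
    by (rule LD_cong[OF oS q]) (rule K1)
  also have "\<dots> = - LD \<i> ce (\<lambda>q. \<Sum>\<gamma>\<in>UNIV. G \<gamma> \<beta> q * et \<gamma> q) q"
    by (rule LD_neg[OF oS _ q]) (intro sm_sum sm_mult G_sm et_sm; simp)
  also have "LD \<i> ce (\<lambda>q. \<Sum>\<gamma>\<in>UNIV. G \<gamma> \<beta> q * et \<gamma> q) q = (\<Sum>\<gamma>\<in>UNIV. LD \<i> ce (\<lambda>q. G \<gamma> \<beta> q * et \<gamma> q) q)"
    by (rule LD_sum[OF oS _ q]) (intro sm_mult G_sm et_sm)
  also have "\<dots> = (\<Sum>\<gamma>\<in>UNIV. G \<gamma> \<beta> q * LD \<i> ce (et \<gamma>) q + LD \<i> ce (G \<gamma> \<beta>) q * et \<gamma> q)"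
    by (rule sum.cong[OF refl]) (rule LD_mult[OF oS G_sm et_sm q])
  also have "\<dots> = (\<Sum>\<gamma>\<in>UNIV. G \<gamma> \<beta> q * LD \<i> ce (et \<gamma>) q) - (\<Sum>\<gamma>\<in>UNIV. \<Sum>a\<in>UNIV. G \<gamma> a q * Wb (Some \<beta>) (ce a) q * et \<gamma> q)"
    by (simp add: DBG[OF q] sum.distrib sum_distrib_right sum_negf sum_subtractf)
  finally have 1: "LD \<i> ce (ps \<beta>) q = - ((\<Sum>\<gamma>\<in>UNIV. G \<gamma> \<beta> q * LD \<i> ce (et \<gamma>) q) - (\<Sum>\<gamma>\<in>UNIV. \<Sum>a\<in>UNIV. G \<gamma> a q * Wb (Some \<beta>) (ce a) q * et \<gamma> q))" .
  have "LD \<i> ce (ps \<beta>) q = (\<Sum>b\<in>UNIV. \<Sum>\<gamma>\<in>UNIV. G \<gamma> b q * et \<gamma> q * Wb (Some \<beta>) (ce b) q)"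
    by (simp add: DBps[OF q] sum_distrib_right)
  also have "\<dots> = (\<Sum>\<gamma>\<in>UNIV. \<Sum>b\<in>UNIV. G \<gamma> b q * et \<gamma> q * Wb (Some \<beta>) (ce b) q)"
    by (rule sum.swap)
  also have "\<dots> = (\<Sum>\<gamma>\<in>UNIV. \<Sum>a\<in>UNIV. G \<gamma> a q * Wb (Some \<beta>) (ce a) q * et \<gamma> q)"
    by (simp add: mult_ac)
  finally have 2: "LD \<i> ce (ps \<beta>) q = (\<Sum>\<gamma>\<in>UNIV. \<Sum>a\<in>UNIV. G \<gamma> a q * Wb (Some \<beta>) (ce a) q * et \<gamma> q)" .
  from 1 2 show ?thesis by simp
qed

lemma M1: assumes q: "q \<in> SS" shows "LD \<i> ce (et r) q = 0"
proof -
  have "0 = (\<Sum>\<beta>\<in>UNIV. Gi r \<beta> q * (\<Sum>\<gamma>\<in>UNIV. G \<gamma> \<beta> q * LD \<i> ce (et \<gamma>) q))"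
    by (simp add: M1a[OF q])
  also have "\<dots> = (\<Sum>\<beta>\<in>UNIV. \<Sum>\<gamma>\<in>UNIV. Gi r \<beta> q * G \<gamma> \<beta> q * LD \<i> ce (et \<gamma>) q)"
    by (simp add: sum_distrib_left mult.assoc)
  also have "\<dots> = (\<Sum>\<gamma>\<in>UNIV. \<Sum>\<beta>\<in>UNIV. Gi r \<beta> q * G \<gamma> \<beta> q * LD \<i> ce (et \<gamma>) q)"
    by (rule sum.swap)
  also have "\<dots> = (\<Sum>\<gamma>\<in>UNIV. (\<Sum>\<beta>\<in>UNIV. Gi r \<beta> q * G \<gamma> \<beta> q) * LD \<i> ce (et \<gamma>) q)"
    by (simp add: sum_distrib_right)
  also have "\<dots> = (\<Sum>\<gamma>\<in>UNIV. (if r = \<gamma> then LD \<i> ce (et \<gamma>) q else 0))"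
    by (rule sum.cong[OF refl]) (simp add: inv1[OF q])
  also have "\<dots> = LD \<i> ce (et r) q" by simp
  finally show ?thesis by simp
qed

end


lemma lin2: fixes x a b :: complex assumes "x + (a + b) = 0" shows "x + a = - b"
proof -
  have "x + a = (x + (a + b)) - b" by simp
  then show ?thesis using assms by simp
qed

lemma LA:
  fixes Gm :: "complex^'n::finite^'n" and A :: "'n \<Rightarrow> 'n \<Rightarrow> complex"
  assumes hp: "herm_pos Gm"
    and sym: "\<And>c d. (\<Sum>r\<in>UNIV. Gm $ r $ d * A c r) = (\<Sum>r\<in>UNIV. Gm $ r $ c * A d r)"
    and F: "\<And>a r. (\<Sum>c\<in>UNIV. cnj (A a c) * A c r) = 0"
  shows "A c0 r0 = 0"
proof -
  define Q where "Q c = (\<Sum>i\<in>UNIV. \<Sum>j\<in>UNIV. Gm $ i $ j * (\<chi> i. A c i) $ i * cnj ((\<chi> i. A c i) $ j))" for c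
  have Qpos: "(\<chi> i. A c i) \<noteq> 0 \<Longrightarrow> Re (Q c) > 0" for c
    using hp unfolding herm_pos_def Q_def by blast
  have Qge: "Re (Q c) \<ge> 0" for c
  proof (cases "(\<chi> i. A c i) = 0")
    case True
    then show ?thesis by (simp add: Q_def)
  next
    case False
    then show ?thesis using Qpos[of c] by simp
  qed
  have s1: "Q c = (\<Sum>j\<in>UNIV. (\<Sum>r\<in>UNIV. Gm $ r $ j * A c r) * cnj (A c j))" for c
    unfolding Q_def by (subst sum.swap) (simp add: sum_distrib_right)
  have s2: "Q c = (\<Sum>j\<in>UNIV. \<Sum>r\<in>UNIV. Gm $ r $ c * (cnj (A c j) * A j r))" for c
  proof -
    have "Q c = (\<Sum>j\<in>UNIV. (\<Sum>r\<in>UNIV. Gm $ r $ c * A j r) * cnj (A c j))"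
      unfolding s1 using sym[of c] by simp
    also have "\<dots> = (\<Sum>j\<in>UNIV. \<Sum>r\<in>UNIV. Gm $ r $ c * (cnj (A c j) * A j r))"
      by (simp add: sum_distrib_right sum_distrib_left mult_ac)
    finally show ?thesis .
  qed
  have s3: "Q c = (\<Sum>r\<in>UNIV. Gm $ r $ c * (\<Sum>j\<in>UNIV. cnj (A c j) * A j r))" for c
    unfolding s2 by (subst sum.swap) (simp add: sum_distrib_left)
  have Q0: "(\<Sum>c\<in>UNIV. Re (Q c)) = 0" unfolding s3 F by simp
  have "Re (Q c0) = 0" using Q0 Qge sum_nonneg_eq_0_iff[of UNIV "\<lambda>c. Re (Q c)"] by simp
  then have "(\<chi> i. A c0 i) = 0" using Qpos[of c0] by fastforce
  then show ?thesis by (simp add: vec_eq_iff)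
qed

context geo
begin

lemma H: assumes q: "q \<in> SS"
  shows "LD (- \<i>) et (G a d) q = - (\<Sum>\<gamma>\<in>UNIV. G \<gamma> d q * W (Some a) (et \<gamma>) q)"
proof -
  have "W None (G a d) q = W None (gf a d) q + W None (W (Some a) (Wb (Some d) Phi)) q"
    unfolding gmet_eq by (rule wop_add[OF oS gf_sm WWb_sm q])
  also have "\<dots> = W (Some a) (ps d) q"
    using gf_z[OF q] comm[OF W_sm[OF Phi_sm] q, of "- \<i>" None "- \<i>" "Some a"] by simp
  also have "\<dots> = W (Some a) (\<lambda>q. - (\<Sum>\<gamma>\<in>UNIV. G \<gamma> d q * et \<gamma> q)) q"
    by (rule wop_cong[OF oS q]) (rule K1)
  also have "\<dots> = - (\<Sum>\<gamma>\<in>UNIV. G \<gamma> d q * W (Some a) (et \<gamma>) q + W (Some a) (G \<gamma> d) q * et \<gamma> q)"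
    by (rule W_negsum_mult[OF q G_sm et_sm])
  also have "\<dots> = - (\<Sum>\<gamma>\<in>UNIV. G \<gamma> d q * W (Some a) (et \<gamma>) q) - (\<Sum>\<gamma>\<in>UNIV. et \<gamma> q * W (Some \<gamma>) (G a d) q)"
  proof -
    have "(\<Sum>\<gamma>\<in>UNIV. W (Some a) (G \<gamma> d) q * et \<gamma> q) = (\<Sum>\<gamma>\<in>UNIV. et \<gamma> q * W (Some \<gamma>) (G a d) q)"
    proof (rule sum.cong[OF refl])
      fix \<gamma>
      show "W (Some a) (G \<gamma> d) q * et \<gamma> q = et \<gamma> q * W (Some \<gamma>) (G a d) q"
        using G_kahler[OF q, of a \<gamma> d] by (simp add: mult.commute)
    qed
    then show ?thesis by (simp add: sum.distrib)
  qed
  finally show ?thesis unfolding LD_def by simp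
qed

lemma H2: assumes q: "q \<in> SS"
  shows "(\<Sum>d\<in>UNIV. Gi r d q * LD (- \<i>) et (G a d) q) = - W (Some a) (et r) q"
proof -
  have "(\<Sum>d\<in>UNIV. Gi r d q * LD (- \<i>) et (G a d) q)
      = - (\<Sum>d\<in>UNIV. \<Sum>\<gamma>\<in>UNIV. Gi r d q * G \<gamma> d q * W (Some a) (et \<gamma>) q)"
    by (simp add: H[OF q] sum_distrib_left sum_negf mult.assoc)
  also have "\<dots> = - (\<Sum>\<gamma>\<in>UNIV. \<Sum>d\<in>UNIV. Gi r d q * G \<gamma> d q * W (Some a) (et \<gamma>) q)"
    by (subst sum.swap) simp
  also have "\<dots> = - (\<Sum>\<gamma>\<in>UNIV. (\<Sum>d\<in>UNIV. Gi r d q * G \<gamma> d q) * W (Some a) (et \<gamma>) q)"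
    by (simp add: sum_distrib_right)
  also have "\<dots> = - (\<Sum>\<gamma>\<in>UNIV. (if r = \<gamma> then W (Some a) (et \<gamma>) q else 0))"
    by (rule arg_cong[where f=uminus], rule sum.cong[OF refl]) (simp add: inv1[OF q])
  also have "\<dots> = - W (Some a) (et r) q" by simp
  finally show ?thesis .
qed

lemma Dzb_LD: "Dzb g0 phi h q = LD \<i> ce h q" by (simp add: Dzb_def LD_def wirtb_wop)
lemma Dz_LD: "Dz g0 phi h q = LD (- \<i>) et h q" by (simp add: Dz_def LD_def wirt_wop)

lemma curv_eq: assumes q: "q \<in> SS"
  shows "curv g0 phi r a q = - (\<Sum>c\<in>UNIV. cnj (Wb (Some a) (et c) q) * Wb (Some c) (et r) q)"
proof -
  have "curv g0 phi r a q = - LD \<i> ce (\<lambda>q. \<Sum>d\<in>UNIV. Gi r d q * LD (- \<i>) et (G a d) q) q"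
    by (simp add: curv_def Dzb_LD Dz_LD)
  also have "\<dots> = - LD \<i> ce (\<lambda>q. - W (Some a) (et r) q) q"
    by (rule arg_cong[where f=uminus], rule LD_cong[OF oS q]) (rule H2)
  also have "\<dots> = LD \<i> ce (W (Some a) (et r)) q"
    using LD_neg[OF oS W_sm[OF et_sm] q] by simp
  also have "\<dots> = W (Some a) (Wb None (et r)) q + (\<Sum>c\<in>UNIV. ce c q * W (Some a) (Wb (Some c) (et r)) q)"
    unfolding LD_def using comm[OF et_sm q] by simp
  also have "\<dots> = - (\<Sum>c\<in>UNIV. W (Some a) (ce c) q * Wb (Some c) (et r) q)"
  proof (rule lin2)
    have sm2: "(\<lambda>q. \<Sum>c\<in>UNIV. ce c q * Wb (Some c) (et r) q) \<in> sm SS"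
      by (intro sm_sum sm_mult ce_sm W_sm et_sm) simp
    have "W (Some a) (\<lambda>q. Wb None (et r) q + (\<Sum>c\<in>UNIV. ce c q * Wb (Some c) (et r) q)) q = 0"
      by (rule wop_zero[OF q]) (rule M1[unfolded LD_def])
    also have "W (Some a) (\<lambda>q. Wb None (et r) q + (\<Sum>c\<in>UNIV. ce c q * Wb (Some c) (et r) q)) q
       = W (Some a) (Wb None (et r)) q + W (Some a) (\<lambda>q. \<Sum>c\<in>UNIV. ce c q * Wb (Some c) (et r) q) q"
      by (rule wop_add[OF oS W_sm[OF et_sm] sm2 q])
    also have "W (Some a) (\<lambda>q. \<Sum>c\<in>UNIV. ce c q * Wb (Some c) (et r) q) q
       = (\<Sum>c\<in>UNIV. W (Some a) (\<lambda>q. ce c q * Wb (Some c) (et r) q) q)"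
      by (rule wop_sum[OF oS]) (simp_all add: sm_mult[OF ce_sm W_sm[OF et_sm]] q)
    also have "\<dots> = (\<Sum>c\<in>UNIV. ce c q * W (Some a) (Wb (Some c) (et r)) q + W (Some a) (ce c) q * Wb (Some c) (et r) q)"
      by (rule sum.cong[OF refl]) (rule wop_mult[OF oS ce_sm W_sm[OF et_sm] q])
    finally show "W (Some a) (Wb None (et r)) q + ((\<Sum>c\<in>UNIV. ce c q * W (Some a) (Wb (Some c) (et r)) q)
        + (\<Sum>c\<in>UNIV. W (Some a) (ce c) q * Wb (Some c) (et r) q)) = 0"
      by (simp add: sum.distrib)
  qed
  also have "\<dots> = - (\<Sum>c\<in>UNIV. cnj (Wb (Some a) (et c) q) * Wb (Some c) (et r) q)"
    using wop_cnj[OF oS et_sm q] by simp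
  finally show ?thesis .
qed

lemma Sym: assumes q: "q \<in> SS"
  shows "(\<Sum>r\<in>UNIV. G r d q * Wb (Some c) (et r) q) = (\<Sum>r\<in>UNIV. G r c q * Wb (Some d) (et r) q)"
proof -
  have P: "Wb (Some c) (ps d) q = - (\<Sum>r\<in>UNIV. G r d q * Wb (Some c) (et r) q) - (\<Sum>r\<in>UNIV. Wb (Some c) (G r d) q * et r q)"
    for c d
  proof -
    have "Wb (Some c) (ps d) q = Wb (Some c) (\<lambda>q. - (\<Sum>r\<in>UNIV. G r d q * et r q)) q"
      by (rule wop_cong[OF oS q]) (rule K1)
    also have "\<dots> = - (\<Sum>r\<in>UNIV. G r d q * Wb (Some c) (et r) q + Wb (Some c) (G r d) q * et r q)"
      by (rule W_negsum_mult[OF q G_sm et_sm])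
    finally show ?thesis by (simp add: sum.distrib)
  qed
  have sw: "Wb (Some c) (ps d) q = Wb (Some d) (ps c) q" by (rule Wb_swap[OF q])
  have gb: "(\<Sum>r\<in>UNIV. Wb (Some c) (G r d) q * et r q) = (\<Sum>r\<in>UNIV. Wb (Some d) (G r c) q * et r q)"
    by (rule sum.cong[OF refl]) (simp add: G_bar[OF q, of c _ d])
  from P[of c d] P[of d c] sw gb show ?thesis by simp
qed

lemma main: "(\<forall>p\<in>SS. \<forall>r a. curv g0 phi r a p = 0) \<longleftrightarrow>
         (\<forall>p\<in>SS. \<forall>a b. wirt_bar (Some b) (eta g0 phi a) p = 0)"
proof
  assume L: "\<forall>p\<in>SS. \<forall>r a. curv g0 phi r a p = 0"
  show "\<forall>p\<in>SS. \<forall>a b. wirt_bar (Some b) (eta g0 phi a) p = 0"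
  proof (intro ballI allI)
    fix p a b assume p: "p \<in> SS"
    have "Wb (Some b) (et a) p = 0"
    proof (rule LA[where Gm = "gmet g0 phi p" and A = "\<lambda>c r. Wb (Some c) (et r) p"])
      show "herm_pos (gmet g0 phi p)" using gpos p by blast
      show "(\<Sum>r\<in>UNIV. gmet g0 phi p $ r $ d * Wb (Some c) (et r) p)
          = (\<Sum>r\<in>UNIV. gmet g0 phi p $ r $ c * Wb (Some d) (et r) p)" for c d
        using Sym[OF p, of d c] by simp
      show "(\<Sum>c\<in>UNIV. cnj (Wb (Some a') (et c) p) * Wb (Some c) (et r) p) = 0" for a' r
      proof -
        have "curv g0 phi r a' p = 0" using L p by blast
        then show ?thesis using curv_eq[OF p, of r a'] by simp
      qed
    qed
    then show "wirt_bar (Some b) (eta g0 phi a) p = 0" by (simp add: wirtb_wop)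
  qed
next
  assume R: "\<forall>p\<in>SS. \<forall>a b. wirt_bar (Some b) (eta g0 phi a) p = 0"
  show "\<forall>p\<in>SS. \<forall>r a. curv g0 phi r a p = 0"
  proof (intro ballI allI)
    fix p r a assume p: "p \<in> SS"
    have "Wb (Some c) (et r) p = 0" for c
    proof -
      have "wirt_bar (Some c) (eta g0 phi r) p = 0" using R p by blast
      then show ?thesis by (simp add: wirtb_wop)
    qed
    then show "curv g0 phi r a p = 0" using curv_eq[OF p, of r a] by simp
  qed
qed

end

theorem theorem4p2p7:
  fixes Sig :: "complex set" and U :: "(complex^'n::finite) set"
    and g0 :: "complex^'n \<Rightarrow> complex^'n^'n" and phi :: "'n pt \<Rightarrow> real"
  assumes "open Sig" and "connected Sig" and "open U"
    and "\<forall>a b. smooth_on (Sig \<times> U) (\<lambda>q. g0 (snd q) $ a $ b)"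
    and "\<forall>w\<in>U. herm_pos (g0 w)"
    and "\<forall>p\<in>Sig \<times> U. \<forall>a b c.
           wirt (Some c) (\<lambda>q. g0 (snd q) $ a $ b) p = wirt (Some a) (\<lambda>q. g0 (snd q) $ c $ b) p"
    and "smooth_on (Sig \<times> U) (phic phi)"
    and "\<forall>p\<in>Sig \<times> U. herm_pos (gmet g0 phi p)"
    and "\<forall>p\<in>Sig \<times> U. det (cmat g0 phi p) = 0"
  shows "(\<forall>p\<in>Sig \<times> U. \<forall>r a. curv g0 phi r a p = 0) \<longleftrightarrow>
         (\<forall>p\<in>Sig \<times> U. \<forall>a b. wirt_bar (Some b) (eta g0 phi a) p = 0)"
proof -
  have "geo Sig U g0 phi" unfolding geo_def using assms by blast
  then interpret geo Sig U g0 phi .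
  show ?thesis by (rule main)
qed


end
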